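(* For all positive integers $n,k$, $$N_B(n,k,k+1)\ \ge\ N_P(n,k,k+1)\ \ge\ \Bigl(k-1+\frac1k\Bigr)n.$$
   Context: Fix a finite field $\mathbb{F}_q$; $[n]=\{1,\dots,n\}$. An $(n,N,k,m)$-batch array code (BAC) over $\mathbb{F}_q$ is an $\mathbb{F}_q$-linear map $\mathcal{C}:\mathbf x=(x_1,\dots,x_n)\in\mathbb{F}_q^n\mapsto(\mathbf c_1,\dots,\mathbf c_m)$ with buckets $\mathbf c_\ell\in\mathbb{F}_q^{N_\ell}$, $N_\ell\ge1$ independent of $\mathbf x$, $\sum_\ell N_\ell=N$, such that for every multiset $\{\{i_1,\dots,i_k\}\}$ of elements of $[n]$ there is a partition of $[m]$ into $k$ sets $R_1,\dots,R_k$ such that for each $j\in[k]$, $x_{i_j}$ is an $\mathbb{F}_q$-linear combination of values $f_\ell(\mathbf c_\ell)$, $\ell\in R_j$, for some linear functionals $f_\ell:\mathbb{F}_q^{N_\ell}\to\mathbb{F}_q$ (independent of $\mathbf x$). An $(n,N,k,m)$-PIR array code is defined identically but the requirement is only imposed for multisets $\{\{i,\dots,i\}\}$. $N_P(n,k,m)$ (resp. $N_B(n,k,m)$) is the minimum $N$ for which an $(n,N,k,m)$-PIR array code (resp. BAC) over $\mathbb{F}_q$ exists. *)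

theory Defs
  imports Complex_Main
begin

text \<open>A linear encoder F^n -> F^N, given by its matrix: coordinate t (t < Nb l) of
bucket l (l in 1..m) is the linear form with coefficient vector G l t (indexed by 1..n).\<close>

definition enc :: "(nat \<Rightarrow> nat \<Rightarrow> nat \<Rightarrow> 'a::field) \<Rightarrow> nat \<Rightarrow> (nat \<Rightarrow> 'a) \<Rightarrow> nat \<Rightarrow> nat \<Rightarrow> 'a" where
  "enc G n x l t = (\<Sum>i\<in>{1..n}. G l t i * x i)"

definition recovers :: "nat \<Rightarrow> (nat \<Rightarrow> nat) \<Rightarrow> (nat \<Rightarrow> nat \<Rightarrow> nat \<Rightarrow> 'a::field) \<Rightarrow> nat set \<Rightarrow> nat \<Rightarrow> bool" where
  "recovers n Nb G R i \<longleftrightarrow>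
     (\<exists>(f::nat \<Rightarrow> nat \<Rightarrow> 'a) (lam::nat \<Rightarrow> 'a). \<forall>x::nat \<Rightarrow> 'a.
        x i = (\<Sum>l\<in>R. lam l * (\<Sum>t<Nb l. f l t * enc G n x l t)))"

definition is_partition :: "nat \<Rightarrow> nat \<Rightarrow> (nat \<Rightarrow> nat set) \<Rightarrow> bool" where
  "is_partition m k R \<longleftrightarrow>
     (\<forall>j<k. \<forall>j'<k. j \<noteq> j' \<longrightarrow> R j \<inter> R j' = {}) \<and> (\<Union>j<k. R j) = {1..m}"

definition is_array_code :: "nat \<Rightarrow> nat \<Rightarrow> (nat \<Rightarrow> nat) \<Rightarrow> bool" where
  "is_array_code N m Nb \<longleftrightarrow> (\<forall>l\<in>{1..m}. Nb l \<ge> 1) \<and> (\<Sum>l=1..m. Nb l) = N"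

text \<open>(n,N,k,m)-batch array code: every multiset {{i_1,...,i_k}} over [n]
(given by any enumeration, a list of length k) is served.\<close>

definition is_BAC :: "(nat \<Rightarrow> nat \<Rightarrow> nat \<Rightarrow> 'a::field) \<Rightarrow> (nat \<Rightarrow> nat) \<Rightarrow> nat \<Rightarrow> nat \<Rightarrow> nat \<Rightarrow> nat \<Rightarrow> bool" where
  "is_BAC G Nb n N k m \<longleftrightarrow> is_array_code N m Nb \<and>
     (\<forall>rq. length rq = k \<and> set rq \<subseteq> {1..n} \<longrightarrow>
        (\<exists>R. is_partition m k R \<and> (\<forall>j<k. recovers n Nb G (R j) (rq ! j))))"

definition is_PIR :: "(nat \<Rightarrow> nat \<Rightarrow> nat \<Rightarrow> 'a::field) \<Rightarrow> (nat \<Rightarrow> nat) \<Rightarrow> nat \<Rightarrow> nat \<Rightarrow> nat \<Rightarrow> nat \<Rightarrow> bool" where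
  "is_PIR G Nb n N k m \<longleftrightarrow> is_array_code N m Nb \<and>
     (\<forall>i\<in>{1..n}. \<exists>R. is_partition m k R \<and> (\<forall>j<k. recovers n Nb G (R j) i))"

definition N_P :: "'a::{finite,field} itself \<Rightarrow> nat \<Rightarrow> nat \<Rightarrow> nat \<Rightarrow> nat" where
  "N_P _ n k m = (LEAST N. \<exists>Nb (G::nat \<Rightarrow> nat \<Rightarrow> nat \<Rightarrow> 'a). is_PIR G Nb n N k m)"

definition N_B :: "'a::{finite,field} itself \<Rightarrow> nat \<Rightarrow> nat \<Rightarrow> nat \<Rightarrow> nat" where
  "N_B _ n k m = (LEAST N. \<exists>Nb (G::nat \<Rightarrow> nat \<Rightarrow> nat \<Rightarrow> 'a). is_BAC G Nb n N k m)"

end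

theory Submission
  imports Defs "HOL-Library.FuncSet"
begin

lemma card_Z:
  assumes "finite D"
  shows "card {x::nat \<Rightarrow> 'a::{finite,zero}. \<forall>i. i\<notin>D \<longrightarrow> x i = 0} = card (UNIV::'a set) ^ card D"
proof -
  have "bij_betw (\<lambda>x. restrict x D) {x::nat\<Rightarrow>'a. \<forall>i. i\<notin>D \<longrightarrow> x i = 0} (PiE D (\<lambda>_. UNIV))"
    apply (rule bij_betwI[where g="\<lambda>f i. if i\<in>D then f i else 0"])
    by (auto simp: PiE_def extensional_def restrict_def fun_eq_iff)
  then have "card {x::nat\<Rightarrow>'a. \<forall>i. i\<notin>D \<longrightarrow> x i = 0} = card (PiE D (\<lambda>_. UNIV::'a set))"
    by (rule bij_betw_same_card)
  also have "\<dots> = card (UNIV::'a set)^card D" by (simp add: card_PiE assms)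
  finally show ?thesis .
qed

lemma finite_Z:
  assumes "finite D"
  shows "finite {x::nat \<Rightarrow> 'a::{finite,zero}. \<forall>i. i\<notin>D \<longrightarrow> x i = 0}"
proof -
  have "card (UNIV::'a set) > 0" by (simp add: finite_UNIV_card_ge_0)
  then have "card (UNIV::'a set) ^ card D > 0" by simp
  then have "card {x::nat \<Rightarrow> 'a::{finite,zero}. \<forall>i. i\<notin>D \<longrightarrow> x i = 0} \<noteq> 0"
    unfolding card_Z[OF assms] by linarith
  then show ?thesis by (metis card.infinite)
qed

lemma fiber_count:
  assumes "finite X" "h ` X \<subseteq> Y" "finite Y" "\<And>x. x \<in> X \<Longrightarrow> card {x'\<in>X. h x' = h x} \<le> c"
  shows "card X \<le> card Y * c"
proof -
  have "X = (\<Union>y\<in>h`X. {x\<in>X. h x = y})" by auto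
  then have "card X \<le> (\<Sum>y\<in>h`X. card {x\<in>X. h x = y})"
    using card_UN_le[of "h`X" "\<lambda>y. {x\<in>X. h x = y}"] assms(1) by simp
  also have "\<dots> \<le> (\<Sum>y\<in>h`X. c)"
    by (rule sum_mono) (use assms(4) in blast)
  also have "\<dots> = card (h`X) * c" by simp
  also have "\<dots> \<le> card Y * c" using assms(2,3) by (intro mult_le_mono1 card_mono)
  finally show ?thesis .
qed

lemma rec_det:
  assumes "recovers n Nb G R i" "\<forall>l\<in>R. \<forall>t<Nb l. enc G n x l t = enc G n y l t"
  shows "x i = y i"
proof -
  obtain f lam where F: "\<forall>x. x i = (\<Sum>l\<in>R. lam l * (\<Sum>t<Nb l. f l t * enc G n x l t))"
    using assms(1) unfolding recovers_def by blast
  have "(\<Sum>l\<in>R. lam l * (\<Sum>t<Nb l. f l t * enc G n x l t)) = (\<Sum>l\<in>R. lam l * (\<Sum>t<Nb l. f l t * enc G n y l t))"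
    using assms(2) by (intro sum.cong refl arg_cong2[where f="(*)"]) simp_all
  then show ?thesis using F[rule_format, of x] F[rule_format, of y] by simp
qed

lemma enc_diff: "enc G n (\<lambda>i. x i - y i) l t = enc G n x l t - enc G n y l t"
  unfolding enc_def by (simp add: right_diff_distrib sum_subtractf)

lemma key:
  fixes G :: "nat \<Rightarrow> nat \<Rightarrow> nat \<Rightarrow> 'a::{finite,field}"
  assumes Sa: "Sa = {i\<in>{1..n}. recovers n Nb G {a} i}"
      and Sb: "Sb = {i\<in>{1..n}. recovers n Nb G {b} i}"
      and A: "A = {i\<in>{1..n}. recovers n Nb G {a,b} i \<and> i\<notin>Sa \<and> i\<notin>Sb}"
  shows "card Sa + card Sb + card A \<le> Nb a + Nb b"
proof -
  define Z :: "nat set \<Rightarrow> (nat\<Rightarrow>'a) set" where "Z D = {x. \<forall>i. i\<notin>D \<longrightarrow> x i = 0}" for D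
  define V where "V = Z {1..n}"
  define Q where "Q = Sa \<inter> Sb"
  define P where "P = Sa \<union> Sb \<union> A"
  define q where "q = card (UNIV::'a set)"
  have fin: "finite (Z D)" if "finite D" for D unfolding Z_def by (rule finite_Z[OF that])
  have cardZ: "card (Z D) = q ^ card D" if "finite D" for D unfolding Z_def q_def by (rule card_Z[OF that])
  define h where "h = (\<lambda>(x::nat\<Rightarrow>'a, y::nat\<Rightarrow>'a). ((\<lambda>t. if t < Nb a then enc G n x a t else 0),
       (\<lambda>t. if t < Nb b then enc G n y b t else 0), (\<lambda>i. if i \<in> {1..n} - Q then x i + y i else 0)))"
  have himg: "h ` (V \<times> V) \<subseteq> Z {..<Nb a} \<times> Z {..<Nb b} \<times> Z ({1..n} - Q)"
    unfolding h_def Z_def by auto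
  have fiber: "card {p'\<in>V\<times>V. h p' = h p} \<le> card (Z ({1..n} - P))" if pV: "p \<in> V\<times>V" for p
  proof -
    obtain x y where p: "p = (x,y)" and xV: "x\<in>V" and yV: "y\<in>V" using pV by auto
    have props: "(\<lambda>i. x i - x' i) \<in> Z ({1..n} - P) \<and> (\<forall>i. y' i = y i + (x i - x' i))"
      if "(x',y') \<in> V\<times>V" "h (x',y') = h (x,y)" for x' y'
    proof -
      from that have x'V: "x'\<in>V" and y'V: "y'\<in>V" by auto
      from that(2) have F1: "(\<lambda>t. if t < Nb a then enc G n x' a t else 0) = (\<lambda>t. if t < Nb a then enc G n x a t else 0)"
        and F2: "(\<lambda>t. if t < Nb b then enc G n y' b t else 0) = (\<lambda>t. if t < Nb b then enc G n y b t else 0)"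
        and F3: "(\<lambda>i. if i \<in> {1..n} - Q then x' i + y' i else 0) = (\<lambda>i. if i \<in> {1..n} - Q then x i + y i else 0)"
        unfolding h_def by simp_all
      have E1: "\<forall>t<Nb a. enc G n x' a t = enc G n x a t"
      proof (intro allI impI)
        fix t assume "t < Nb a" then show "enc G n x' a t = enc G n x a t" using fun_cong[OF F1, of t] by simp
      qed
      have E2: "\<forall>t<Nb b. enc G n y' b t = enc G n y b t"
      proof (intro allI impI)
        fix t assume "t < Nb b" then show "enc G n y' b t = enc G n y b t" using fun_cong[OF F2, of t] by simp
      qed
      have E3: "x' i + y' i = x i + y i" if "i\<in>{1..n}-Q" for i using fun_cong[OF F3, of i] that by simp
      have hSa: "x' i = x i" if "i\<in>Sa" for i using rec_det[of n Nb G "{a}" i x' x] E1 that Sa by auto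
      have hSb: "y' i = y i" if "i\<in>Sb" for i using rec_det[of n Nb G "{b}" i y' y] E2 that Sb by auto
      have D: "x i - x' i = y' i - y i" for i
      proof (cases "i \<in> {1..n}")
        case True
        show ?thesis
        proof (cases "i\<in>Q")
          case True then show ?thesis using hSa hSb Q_def by auto
        next
          case False with \<open>i\<in>{1..n}\<close> have "x' i + y' i = x i + y i" using E3 by auto
          then show ?thesis by (metis add_diff_cancel_left' diff_add_eq diff_diff_eq2)
        qed
      next
        case False then show ?thesis using xV yV x'V y'V unfolding V_def Z_def by auto
      qed
      have E4: "\<forall>t<Nb b. enc G n x' b t = enc G n x b t"
      proof (intro allI impI)
        fix t assume "t < Nb b"
        have "enc G n x b t - enc G n x' b t = enc G n (\<lambda>i. x i - x' i) b t" by (simp add: enc_diff)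
        also have "(\<lambda>i. x i - x' i) = (\<lambda>i. y' i - y i)" using D by auto
        also have "enc G n (\<lambda>i. y' i - y i) b t = enc G n y' b t - enc G n y b t" by (simp add: enc_diff)
        also have "\<dots> = 0" using E2 \<open>t<Nb b\<close> by simp
        finally show "enc G n x' b t = enc G n x b t" by simp
      qed
      have hA: "x' i = x i" if "i\<in>A" for i using rec_det[of n Nb G "{a,b}" i x' x] E1 E4 that A by auto
      have "(\<lambda>i. x i - x' i) \<in> Z ({1..n} - P)"
        unfolding Z_def
      proof (intro CollectI allI impI)
        fix i assume i: "i \<notin> {1..n} - P"
        show "x i - x' i = 0"
        proof (cases "i \<in> {1..n}")
          case True then have "i \<in> P" using i by auto
          then consider "i\<in>Sa" | "i\<in>Sb" | "i\<in>A" unfolding P_def by blast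
          then show ?thesis
          proof cases
            case 1 then show ?thesis using hSa by simp
          next
            case 2 then show ?thesis using hSb[OF 2] D[of i] by simp
          next
            case 3 then show ?thesis using hA by simp
          qed
        next
          case False then show ?thesis using xV x'V unfolding V_def Z_def by auto
        qed
      qed
      then show ?thesis using D by (metis add_diff_cancel_left' diff_add_cancel add.commute)
    qed
    show ?thesis
    proof (rule card_inj_on_le[where f="\<lambda>(x',y'). (\<lambda>i. x i - x' i)"])
      show "(\<lambda>(x',y'). \<lambda>i. x i - x' i) ` {p'\<in>V\<times>V. h p' = h p} \<subseteq> Z ({1..n} - P)"
        using props p by auto
      show "inj_on (\<lambda>(x',y'). \<lambda>i. x i - x' i) {p'\<in>V\<times>V. h p' = h p}"
      proof (rule inj_onI)
        fix p1 p2 assume b1: "p1 \<in> {p'\<in>V\<times>V. h p' = h p}" and b2: "p2 \<in> {p'\<in>V\<times>V. h p' = h p}"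
          and e0: "(\<lambda>(x',y'). \<lambda>i. x i - x' i) p1 = (\<lambda>(x',y'). \<lambda>i. x i - x' i) p2"
        obtain x1 y1 where P1: "p1 = (x1,y1)" by (cases p1)
        obtain x2 y2 where P2: "p2 = (x2,y2)" by (cases p2)
        have a1: "(x1,y1)\<in>V\<times>V" "h (x1,y1) = h (x,y)" using b1 P1 p by auto
        have a2: "(x2,y2)\<in>V\<times>V" "h (x2,y2) = h (x,y)" using b2 P2 p by auto
        have e: "(\<lambda>i. x i - x1 i) = (\<lambda>i. x i - x2 i)" using e0 P1 P2 by simp
        have "x1 = x2"
        proof
          fix i show "x1 i = x2 i" using fun_cong[OF e, of i] by simp
        qed
        moreover have "y1 = y2"
        proof
          fix i show "y1 i = y2 i" using props[OF a1] props[OF a2] fun_cong[OF e, of i] by simp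
        qed
        ultimately show "p1 = p2" using P1 P2 by simp
      qed
      show "finite (Z ({1..n}-P))" by (rule fin) simp
    qed
  qed
  have "card (V\<times>V) \<le> card (Z {..<Nb a} \<times> Z {..<Nb b} \<times> Z ({1..n} - Q)) * card (Z ({1..n} - P))"
    by (rule fiber_count[OF _ himg _ fiber]) (auto intro!: finite_cartesian_product fin simp: V_def)
  then have "q^n * q^n \<le> q^Nb a * q^Nb b * q^card({1..n}-Q) * q^card({1..n}-P)"
    by (simp add: card_cartesian_product cardZ V_def)
  then have le: "q^(n+n) \<le> q^(Nb a + Nb b + card({1..n}-Q) + card({1..n}-P))" by (simp add: power_add)
  have "card {0::'a, 1} \<le> q" unfolding q_def by (rule card_mono) auto
  then have q1: "1 < q" by simp
  from power_le_imp_le_exp[OF q1 le] have ex: "n + n \<le> Nb a + Nb b + card({1..n}-Q) + card({1..n}-P)" .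
  have sub: "Sa \<subseteq> {1..n}" "Sb \<subseteq> {1..n}" "A \<subseteq> {1..n}" using Sa Sb A by auto
  have fs: "finite Sa" "finite Sb" "finite A" using sub finite_subset by blast+
  have "Q \<subseteq> {1..n}" "P \<subseteq> {1..n}" using sub unfolding Q_def P_def by auto
  then have c1: "card({1..n}-Q) = n - card Q" "card({1..n}-P) = n - card P"
    "card Q \<le> n" "card P \<le> n" by (auto simp: card_Diff_subset finite_subset dest: card_mono[rotated])
  have "card P = card (Sa \<union> Sb) + card A" unfolding P_def
    by (rule card_Un_disjoint) (use fs A in auto)
  moreover have "card (Sa \<union> Sb) + card Q = card Sa + card Sb" unfolding Q_def
    using card_Un_Int[OF fs(1,2)] by simp
  ultimately show ?thesis using ex c1 by linarith
qed

lemma part_struct: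
  assumes P: "is_partition (k+1) k R" and ne: "\<forall>j<k. R j \<noteq> {}"
  shows "\<exists>a b j0. a \<noteq> b \<and> j0 < k \<and> R j0 = {a,b} \<and> a \<in> {1..k+1} \<and> b \<in> {1..k+1} \<and>
           (\<forall>l\<in>{1..k+1}-{a,b}. \<exists>j<k. R j = {l})"
proof -
  have disj: "\<forall>j<k. \<forall>j'<k. j \<noteq> j' \<longrightarrow> R j \<inter> R j' = {}" and un: "(\<Union>j<k. R j) = {1..k+1}"
    using P unfolding is_partition_def by auto
  have sub: "R j \<subseteq> {1..k+1}" if "j<k" for j using un that by blast
  have fin: "finite (R j)" if "j<k" for j using sub[OF that] finite_subset by blast
  have c1: "card (R j) \<ge> 1" if "j<k" for j using ne fin that by (simp add: Suc_leI card_gt_0_iff)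
  have "card (\<Union>j<k. R j) = (\<Sum>j<k. card (R j))"
    by (rule card_UN_disjoint) (use fin disj in auto)
  then have sumk: "(\<Sum>j<k. card (R j)) = k+1" using un by simp
  define t where "t j = card (R j) - 1" for j
  have "(\<Sum>j<k. card (R j)) = (\<Sum>j<k. t j + 1)"
    proof (rule sum.cong)
    fix j assume "j \<in> {..<k}" then have "card (R j) \<ge> 1" using c1 by simp
    then show "card (R j) = t j + 1" unfolding t_def by simp
  qed simp
  also have "\<dots> = (\<Sum>j<k. t j) + k" by (simp only: sum.distrib) simp
  finally have st: "(\<Sum>j<k. t j) = 1" using sumk by simp
  have "\<exists>j0<k. t j0 \<noteq> 0"
  proof (rule ccontr)
    assume "\<not> ?thesis" then have "(\<Sum>j<k. t j) = 0" by simp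
    then show False using st by simp
  qed
  then obtain j0 where j0: "j0 < k" "t j0 \<noteq> 0" by blast
  have "t j0 \<le> 1" using member_le_sum[of j0 "{..<k}" t] j0 st by simp
  then have cj0: "card (R j0) = 2" using j0 t_def c1[OF j0(1)] by simp
  have others: "card (R j) = 1" if "j<k" "j \<noteq> j0" for j
  proof -
    have "t j0 + t j = (\<Sum>j'\<in>{j0,j}. t j')" using that by simp
    also have "\<dots> \<le> (\<Sum>j<k. t j)" by (rule sum_mono2) (use that j0 in auto)
    finally have "t j = 0" using st j0 by simp
    then show ?thesis using c1[OF that(1)] t_def by simp
  qed
  obtain a b where ab: "a \<noteq> b" "R j0 = {a,b}" using cj0 card_2_iff by metis
  have abL: "a \<in> {1..k+1}" "b \<in> {1..k+1}" using sub[OF j0(1)] ab by auto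
  have "\<forall>l\<in>{1..k+1}-{a,b}. \<exists>j<k. R j = {l}"
  proof
    fix l assume l: "l \<in> {1..k+1}-{a,b}"
    then obtain j where j: "j<k" "l \<in> R j" using un by blast
    have "j \<noteq> j0" using j l ab by auto
    then have "card (R j) = 1" using others j by simp
    then show "\<exists>j<k. R j = {l}" using j by (metis card_1_singletonE singletonD)
  qed
  then show ?thesis using ab abL j0 by blast
qed

lemma double_sum:
  fixes g :: "nat \<Rightarrow> nat"
  assumes "finite L"
  shows "(\<Sum>a\<in>L. \<Sum>b\<in>L-{a}. g a + g b) = 2 * (card L - 1) * sum g L"
proof -
  have r: "(\<Sum>b\<in>L-{a}. g b) + g a = sum g L" if "a\<in>L" for a
    using sum.remove[OF assms that, of g] by simp
  have "(\<Sum>a\<in>L. \<Sum>b\<in>L-{a}. g a + g b) = (\<Sum>a\<in>L. (card L - 1) * g a + (\<Sum>b\<in>L-{a}. g b))"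
    by (rule sum.cong) (use assms in \<open>simp_all add: sum.distrib\<close>)
  also have "\<dots> = (card L - 1) * sum g L + (\<Sum>a\<in>L. \<Sum>b\<in>L-{a}. g b)"
    by (simp add: sum.distrib sum_distrib_left)
  finally have e1: "(\<Sum>a\<in>L. \<Sum>b\<in>L-{a}. g a + g b) = (card L - 1) * sum g L + (\<Sum>a\<in>L. \<Sum>b\<in>L-{a}. g b)" .
  have "(\<Sum>a\<in>L. \<Sum>b\<in>L-{a}. g b) + sum g L = (\<Sum>a\<in>L. (\<Sum>b\<in>L-{a}. g b) + g a)"
    by (simp add: sum.distrib)
  also have "\<dots> = (\<Sum>a\<in>L. sum g L)" by (rule sum.cong) (use r in auto)
  also have "\<dots> = card L * sum g L" by simp
  finally have e2: "(\<Sum>a\<in>L. \<Sum>b\<in>L-{a}. g b) + sum g L = card L * sum g L" .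
  show ?thesis
  proof (cases "card L")
    case 0 then show ?thesis using e1 e2 by simp
  next
    case (Suc m) then show ?thesis using e1 e2 by (simp add: algebra_simps)
  qed
qed

lemma card_ind:
  assumes "finite U" "X \<subseteq> U"
  shows "card X = (\<Sum>i\<in>U. if i\<in>X then 1 else 0)"
proof -
  have "(\<Sum>i\<in>U. if i\<in>X then 1 else 0) = (\<Sum>i\<in>{x\<in>U. x\<in>X}. 1::nat)"
    by (rule sum.inter_filter[symmetric]) (rule assms(1))
  also have "{x\<in>U. x\<in>X} = X" using assms by auto
  finally show ?thesis by simp
qed

lemma rec_nonempty:
  assumes "recovers n Nb (G::nat \<Rightarrow> nat \<Rightarrow> nat \<Rightarrow> 'a::field) R i"
  shows "R \<noteq> {}"
proof
  assume "R = {}"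
  then have "\<forall>x::nat\<Rightarrow>'a. x i = 0" using assms unfolding recovers_def by simp
  from spec[OF this, of "\<lambda>_. 1"] show False by simp
qed

lemma main_bound:
  fixes G :: "nat \<Rightarrow> nat \<Rightarrow> nat \<Rightarrow> 'a::{finite,field}"
  assumes pir: "is_PIR G Nb n N k (k+1)" and k1: "k \<ge> 1"
  shows "(2*k*k+2)*n \<le> 2*k*N + 2*k*n"
proof -
  define L where "L = {1..k+1}"
  define S where "S l = {i\<in>{1..n}. recovers n Nb G {l} i}" for l
  define A where "A a b = {i\<in>{1..n}. recovers n Nb G {a,b} i \<and> i\<notin>S a \<and> i\<notin>S b}" for a b
  define ind :: "bool \<Rightarrow> nat" where "ind P = (if P then 1 else 0)" for P
  have NL: "N = sum Nb L" using pir unfolding is_PIR_def is_array_code_def L_def by simp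
  have finL: "finite L" and cL: "card L = k+1" unfolding L_def by simp_all
  have key': "card (S a) + card (S b) + card (A a b) \<le> Nb a + Nb b" for a b
    by (rule key[of "S a" n Nb G a "S b" b "A a b"]) (simp_all add: S_def A_def)
  have "(\<Sum>a\<in>L. \<Sum>b\<in>L-{a}. (card (S a) + card (S b)) + card (A a b)) \<le> (\<Sum>a\<in>L. \<Sum>b\<in>L-{a}. Nb a + Nb b)"
    by (intro sum_mono) (use key' in auto)
  also have "\<dots> = 2*k*N" using double_sum[OF finL, of Nb] cL NL by simp
  finally have I1: "(\<Sum>a\<in>L. \<Sum>b\<in>L-{a}. (card (S a) + card (S b)) + card (A a b)) \<le> 2*k*N" .
  have "(\<Sum>a\<in>L. \<Sum>b\<in>L-{a}. (card (S a) + card (S b)) + card (A a b))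
        = (\<Sum>a\<in>L. \<Sum>b\<in>L-{a}. card (S a) + card (S b)) + (\<Sum>a\<in>L. \<Sum>b\<in>L-{a}. card (A a b))"
    by (simp add: sum.distrib)
  also have "(\<Sum>a\<in>L. \<Sum>b\<in>L-{a}. card (S a) + card (S b)) = 2*k*(\<Sum>l\<in>L. card (S l))"
    using double_sum[OF finL, of "\<lambda>l. card (S l)"] cL by simp
  finally have lhs: "(\<Sum>a\<in>L. \<Sum>b\<in>L-{a}. (card (S a) + card (S b)) + card (A a b))
        = 2*k*(\<Sum>l\<in>L. card (S l)) + (\<Sum>a\<in>L. \<Sum>b\<in>L-{a}. card (A a b))" .
  have cS: "(\<Sum>l\<in>L. card (S l)) = (\<Sum>i\<in>{1..n}. \<Sum>l\<in>L. ind (i\<in>S l))"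
  proof -
    have "(\<Sum>l\<in>L. card (S l)) = (\<Sum>l\<in>L. \<Sum>i\<in>{1..n}. ind (i\<in>S l))"
      by (rule sum.cong[OF refl], unfold ind_def, rule card_ind) (auto simp: S_def)
    also have "\<dots> = (\<Sum>i\<in>{1..n}. \<Sum>l\<in>L. ind (i\<in>S l))" by (rule sum.swap)
    finally show ?thesis .
  qed
  have cA: "(\<Sum>a\<in>L. \<Sum>b\<in>L-{a}. card (A a b)) = (\<Sum>i\<in>{1..n}. \<Sum>a\<in>L. \<Sum>b\<in>L-{a}. ind (i\<in>A a b))"
  proof -
    have "(\<Sum>a\<in>L. \<Sum>b\<in>L-{a}. card (A a b)) = (\<Sum>a\<in>L. \<Sum>b\<in>L-{a}. \<Sum>i\<in>{1..n}. ind (i\<in>A a b))"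
      by (intro sum.cong refl, unfold ind_def, rule card_ind) (auto simp: A_def)
    also have "\<dots> = (\<Sum>a\<in>L. \<Sum>i\<in>{1..n}. \<Sum>b\<in>L-{a}. ind (i\<in>A a b))"
      by (rule sum.cong[OF refl]) (rule sum.swap)
    also have "\<dots> = (\<Sum>i\<in>{1..n}. \<Sum>a\<in>L. \<Sum>b\<in>L-{a}. ind (i\<in>A a b))"
      by (rule sum.swap)
    finally show ?thesis .
  qed
  have per: "2*k*k+2 \<le> 2*k*(\<Sum>l\<in>L. ind (i\<in>S l)) + (\<Sum>a\<in>L. \<Sum>b\<in>L-{a}. ind (i\<in>A a b)) + 2*k"
    if i: "i\<in>{1..n}" for i
  proof -
    have "\<exists>R. is_partition (k+1) k R \<and> (\<forall>j<k. recovers n Nb G (R j) i)"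
      using pir i unfolding is_PIR_def by simp
    then obtain R where part: "is_partition (k+1) k R" and rec: "\<forall>j<k. recovers n Nb G (R j) i"
      by (elim exE conjE)
    have ne: "\<forall>j<k. R j \<noteq> {}" using rec rec_nonempty[of n Nb G _ i] by simp
    from part_struct[OF part ne] obtain a b j0 where
       abx: "a \<noteq> b \<and> j0 < k \<and> R j0 = {a,b} \<and> a \<in> {1..k+1} \<and> b \<in> {1..k+1} \<and>
           (\<forall>l\<in>{1..k+1}-{a,b}. \<exists>j<k. R j = {l})"
      by (elim exE)
    then have ab: "a \<noteq> b" "j0 < k" "R j0 = {a,b}" "a \<in> L" "b \<in> L"
       and sing: "\<forall>l\<in>L-{a,b}. \<exists>j<k. R j = {l}" unfolding L_def by simp_all
    have recab: "recovers n Nb G {a,b} i" using rec[rule_format, OF ab(2)] unfolding ab(3) .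
    have singS: "i \<in> S l" if lL: "l \<in> L-{a,b}" for l
    proof -
      obtain j where j: "j<k" "R j = {l}" using sing lL by blast
      have "recovers n Nb G {l} i" using rec[rule_format, OF j(1)] unfolding j(2) .
      then show ?thesis using i unfolding S_def by simp
    qed
    define c where "c = (\<Sum>l\<in>L. ind (i\<in>S l))"
    define cnt where "cnt = (\<Sum>a\<in>L. \<Sum>b\<in>L-{a}. ind (i\<in>A a b))"
    have "c = (\<Sum>l\<in>L-{a,b}. ind (i\<in>S l)) + (\<Sum>l\<in>{a,b}. ind (i\<in>S l))"
      unfolding c_def by (rule sum.subset_diff) (use finL ab in auto)
    also have "(\<Sum>l\<in>L-{a,b}. ind (i\<in>S l)) = (\<Sum>l\<in>L-{a,b}. 1)"
      by (rule sum.cong) (use singS ind_def in auto)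
    also have "\<dots> = k - 1" using cL ab by (simp add: card_Diff_subset)
    also have "(\<Sum>l\<in>{a,b}. ind (i\<in>S l)) = ind (i\<in>S a) + ind (i\<in>S b)" using ab by simp
    finally have c_ge: "c = k - 1 + ind (i\<in>S a) + ind (i\<in>S b)" by simp
    have F: "ind (i\<in>A a' b') \<le> (\<Sum>b\<in>L-{a'}. ind (i\<in>A a' b))" if "a' \<in> L" "b' \<in> L" "a' \<noteq> b'" for a' b'
      by (rule member_le_sum) (use that finL in auto)
    have "(\<Sum>b\<in>L-{a}. ind (i\<in>A a b)) + (\<Sum>b'\<in>L-{b}. ind (i\<in>A b b')) = (\<Sum>a'\<in>{a,b}. \<Sum>b\<in>L-{a'}. ind (i\<in>A a' b))"
      using ab by simp
    also have "\<dots> \<le> cnt" unfolding cnt_def by (rule sum_mono2) (use finL ab in auto)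
    finally have cnt_ge: "ind (i\<in>A a b) + ind (i\<in>A b a) \<le> cnt" using F[of a b] F[of b a] ab by linarith
    show ?thesis
    proof (cases "i \<in> S a \<or> i \<in> S b")
      case True
      then have "k \<le> c" using c_ge k1 by (auto simp: ind_def)
      then have "k*k \<le> k*c" by (rule mult_le_mono2)
      then show ?thesis unfolding c_def[symmetric] using k1 by linarith
    next
      case False
      have ba: "{b,a} = {a,b}" by blast
      have "i \<in> A a b" "i \<in> A b a" using recab i False unfolding A_def ba by simp_all
      then have "2 \<le> cnt" using cnt_ge by (simp add: ind_def)
      moreover have "k \<le> c + 1" using c_ge by simp
      then have "k*k \<le> k*(c+1)" by (rule mult_le_mono2)
      ultimately show ?thesis unfolding c_def[symmetric] cnt_def[symmetric] by (simp add: algebra_simps)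
    qed
  qed
  have "(\<Sum>i\<in>{1..n}. 2*k*k+2) \<le> (\<Sum>i\<in>{1..n}. 2*k*(\<Sum>l\<in>L. ind (i\<in>S l)) + (\<Sum>a\<in>L. \<Sum>b\<in>L-{a}. ind (i\<in>A a b)) + 2*k)"
    by (rule sum_mono) (rule per)
  also have "\<dots> = 2*k*(\<Sum>i\<in>{1..n}. \<Sum>l\<in>L. ind (i\<in>S l)) + (\<Sum>i\<in>{1..n}. \<Sum>a\<in>L. \<Sum>b\<in>L-{a}. ind (i\<in>A a b)) + 2*k*n"
    by (simp add: sum.distrib sum_distrib_left)
  finally show ?thesis using I1 lhs cS cA by (simp add: algebra_simps)
qed

definition Gt :: "nat \<Rightarrow> nat \<Rightarrow> nat \<Rightarrow> 'a::field" where
  "Gt l t j = (if j = Suc t then 1 else 0)"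

lemma enc_Gt: "t < n \<Longrightarrow> enc Gt n x l t = x (Suc t)"
proof -
  assume t: "t < n"
  have "enc Gt n x l t = (\<Sum>j\<in>{1..n}. if j = Suc t then x j else 0)"
    unfolding enc_def Gt_def by (rule sum.cong) simp_all
  also have "\<dots> = x (Suc t)" using t by (simp add: sum.delta)
  finally show ?thesis .
qed

lemma rec_Gt:
  assumes "finite R" "l0 \<in> R" "i \<in> {1..n}"
  shows "recovers n (\<lambda>_. n) (Gt::nat \<Rightarrow> nat \<Rightarrow> nat \<Rightarrow> 'a::field) R i"
  unfolding recovers_def
proof (intro exI allI)
  fix x :: "nat \<Rightarrow> 'a"
  let ?f = "\<lambda>(l::nat) t. if t = i - 1 then (1::'a) else 0"
  let ?lam = "\<lambda>l. if l = l0 then (1::'a) else 0"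
  have inner: "(\<Sum>t<n. ?f l t * enc Gt n x l t) = x i" for l
  proof -
    have "(\<Sum>t<n. ?f l t * enc Gt n x l t) = (\<Sum>t<n. if t = i - 1 then enc Gt n x l t else 0)"
      by (rule sum.cong) simp_all
    also have "\<dots> = enc Gt n x l (i - 1)"
    proof -
      have "i - 1 \<in> {..<n}" using assms(3) by auto
      then show ?thesis by (simp only: sum.delta finite_lessThan if_True)
    qed
    also have "\<dots> = x i"
    proof -
      have "i - 1 < n" "Suc (i - 1) = i" using assms(3) by auto
      then show ?thesis using enc_Gt[of "i - 1" n x l] by simp
    qed
    finally show ?thesis .
  qed
  have "(\<Sum>l\<in>R. ?lam l * (\<Sum>t<n. ?f l t * enc Gt n x l t)) = (\<Sum>l\<in>R. if l = l0 then x i else 0)"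
    using inner by (intro sum.cong) simp_all
  also have "\<dots> = x i" using assms(1,2) by (simp add: sum.delta)
  finally show "x i = (\<Sum>l\<in>R. ?lam l * (\<Sum>t<(\<lambda>_. n) l. ?f l t * enc Gt n x l t))" by simp
qed

lemma BAC_exists:
  assumes "n \<ge> 1" "k \<ge> 1"
  shows "is_BAC (Gt::nat \<Rightarrow> nat \<Rightarrow> nat \<Rightarrow> 'a::field) (\<lambda>_. n) n ((k+1)*n) k (k+1)"
  unfolding is_BAC_def
proof (intro conjI allI impI)
  show "is_array_code ((k+1)*n) (k+1) (\<lambda>_. n)" unfolding is_array_code_def using assms by simp
  fix rq :: "nat list" assume rq: "length rq = k \<and> set rq \<subseteq> {1..n}"
  define R where "R j = (if j < k - 1 then {Suc j} else {k, Suc k})" for j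
  have part: "is_partition (k+1) k R"
    unfolding is_partition_def
  proof (intro conjI allI impI)
    fix j j' assume jj: "j<k" "j'<k" "j \<noteq> j'"
    show "R j \<inter> R j' = {}"
    proof (cases "j < k - 1")
      case True
      show ?thesis
      proof (cases "j' < k - 1")
        case True
        then show ?thesis using \<open>j < k - 1\<close> jj unfolding R_def by simp
      next
        case False
        then show ?thesis using \<open>j < k - 1\<close> jj unfolding R_def by simp
      qed
    next
      case False
      then have "j' < k - 1" using jj by linarith
      then show ?thesis using False jj unfolding R_def by simp
    qed
  next
    show "(\<Union>j<k. R j) = {1..k+1}"
    proof
      show "(\<Union>j<k. R j) \<subseteq> {1..k+1}" unfolding R_def by auto
    next
      show "{1..k+1} \<subseteq> (\<Union>j<k. R j)"
      proof
        fix l assume l: "l \<in> {1..k+1}"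
        show "l \<in> (\<Union>j<k. R j)"
        proof (cases "l < k")
          case True
          then have "l - 1 < k" "l \<in> R (l - 1)" using l unfolding R_def by auto
          then show ?thesis by (intro UN_I[of "l - 1"]) simp_all
        next
          case False
          then have "l \<in> R (k - 1)" "k - 1 < k" using l assms unfolding R_def by auto
          then show ?thesis by (intro UN_I[of "k - 1"]) simp_all
        qed
      qed
    qed
  qed
  have "\<forall>j<k. recovers n (\<lambda>_. n) (Gt::nat \<Rightarrow> nat \<Rightarrow> nat \<Rightarrow> 'a) (R j) (rq ! j)"
  proof (intro allI impI)
    fix j assume j: "j < k"
    have "rq ! j \<in> set rq" using rq j by simp
    then have iN: "rq ! j \<in> {1..n}" using rq by blast
    have sR: "Suc j \<in> R j" and fR: "finite (R j)" unfolding R_def using j by auto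
    show "recovers n (\<lambda>_. n) (Gt::nat \<Rightarrow> nat \<Rightarrow> nat \<Rightarrow> 'a) (R j) (rq ! j)"
      by (rule rec_Gt[OF fR sR iN])
  qed
  with part show "\<exists>R. is_partition (k + 1) k R \<and> (\<forall>j<k. recovers n (\<lambda>_. n) (Gt::nat \<Rightarrow> nat \<Rightarrow> nat \<Rightarrow> 'a) (R j) (rq ! j))"
    by (intro exI conjI)
qed

lemma BAC_PIR:
  assumes "is_BAC G Nb n N k m"
  shows "is_PIR G Nb n N k m"
  unfolding is_PIR_def
proof (intro conjI ballI)
  show "is_array_code N m Nb" using assms unfolding is_BAC_def by simp
  fix i assume i: "i \<in> {1..n}"
  have "length (replicate k i) = k \<and> set (replicate k i) \<subseteq> {1..n}" using i by auto
  then obtain R where "is_partition m k R" "\<forall>j<k. recovers n Nb G (R j) (replicate k i ! j)"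
    using assms unfolding is_BAC_def by blast
  then show "\<exists>R. is_partition m k R \<and> (\<forall>j<k. recovers n Nb G (R j) i)" by auto
qed

lemma final_arith:
  fixes k n N :: nat
  assumes nb: "(2*k*k+2)*n \<le> 2*k*N + 2*k*n" and k: "k \<ge> 1"
  shows "(real k - 1 + 1 / real k) * real n \<le> real N"
proof -
  have "real ((2*k*k+2)*n) \<le> real (2*k*N + 2*k*n)" using nb by (simp only: of_nat_le_iff)
  then have r: "2*(real k*real k*real n) + 2*real n \<le> 2*(real k*real N) + 2*(real k*real n)"
    by (simp add: algebra_simps)
  have kpos: "real k > 0" using k by simp
  have e: "(real k - 1 + 1 / real k) * real n = (real k*real k*real n - real k*real n + real n) / real k"
    using kpos by (simp add: field_simps)
  have "real k*real k*real n - real k*real n + real n \<le> real k * real N" using r by linarith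
  then have "(real k*real k*real n - real k*real n + real n) / real k \<le> real N"
    using kpos by (simp add: divide_le_eq mult.commute)
  then show ?thesis using e by simp
qed

theorem corollary3p3:
  fixes n k :: nat
  assumes "n \<ge> 1" and "k \<ge> 1"
  shows "N_B TYPE('a::{finite,field}) n k (k+1) \<ge> N_P TYPE('a) n k (k+1)
       \<and> real (N_P TYPE('a) n k (k+1)) \<ge> (real k - 1 + 1 / real k) * real n"
proof
  have ex: "\<exists>N Nb (G::nat \<Rightarrow> nat \<Rightarrow> nat \<Rightarrow> 'a). is_BAC G Nb n N k (k+1)"
    by (intro exI) (rule BAC_exists[OF assms])
  have "\<exists>Nb (G::nat \<Rightarrow> nat \<Rightarrow> nat \<Rightarrow> 'a). is_BAC G Nb n (N_B TYPE('a) n k (k+1)) k (k+1)"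
    unfolding N_B_def using ex by (rule LeastI_ex)
  then obtain Nb and G :: "nat \<Rightarrow> nat \<Rightarrow> nat \<Rightarrow> 'a" where b: "is_BAC G Nb n (N_B TYPE('a) n k (k+1)) k (k+1)"
    by (elim exE)
  have p: "is_PIR G Nb n (N_B TYPE('a) n k (k+1)) k (k+1)" using BAC_PIR[OF b] .
  show "N_B TYPE('a) n k (k+1) \<ge> N_P TYPE('a) n k (k+1)"
    unfolding N_P_def by (rule Least_le) (intro exI, rule p)
  have "\<exists>Nb (G::nat \<Rightarrow> nat \<Rightarrow> nat \<Rightarrow> 'a). is_PIR G Nb n (N_P TYPE('a) n k (k+1)) k (k+1)"
    unfolding N_P_def by (rule LeastI_ex) (intro exI, rule p)
  then obtain Nb' and G' :: "nat \<Rightarrow> nat \<Rightarrow> nat \<Rightarrow> 'a" where p': "is_PIR G' Nb' n (N_P TYPE('a) n k (k+1)) k (k+1)"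
    by (elim exE)
  have nb: "(2*k*k+2)*n \<le> 2*k*(N_P TYPE('a) n k (k+1)) + 2*k*n" by (rule main_bound[OF p' assms(2)])
  show "real (N_P TYPE('a) n k (k+1)) \<ge> (real k - 1 + 1 / real k) * real n"
    by (rule final_arith[OF nb assms(2)])
qed

end
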